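(* As formal power series in $q$ (equivalently for $|q|<1$), $$\frac{1}{(q;q)_{\infty}} + 4\sum_{n=1}^{\infty}\frac{(-1)^nq^{n(n+1)/2}}{(q;q)_{n-1}(1-q^{2n})(q^{n+1};q)_{\infty}}=\sum_{n =0}^{\infty}\frac{(-1)^nq^{n(n+1)/2}(1-q^{n+1})}{(q;q)_n(1+q^{n+1})(q^{n+2};q)_{\infty}}.$$
   Context: $(z;q)_n=\prod_{j=0}^{n-1}(1-zq^j)$ and $(z;q)_\infty=\prod_{j\ge0}(1-zq^j)$. *)

theory Defs
  imports "HOL-Analysis.Analysis"
begin

definition qpoch :: "complex \<Rightarrow> complex \<Rightarrow> nat \<Rightarrow> complex" where
  "qpoch z q n = (\<Prod>j<n. 1 - z * q ^ j)"

definition qpoch_inf :: "complex \<Rightarrow> complex \<Rightarrow> complex" where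
  "qpoch_inf z q = (\<Prod>j. 1 - z * q ^ j)"

end

theory Submission
  imports Defs
begin

lemma qconv:
  fixes q z :: complex
  assumes "norm q < 1"
  shows "convergent_prod (\<lambda>j. 1 - z * q ^ j)"
proof -
  have "summable (\<lambda>j. norm z * norm q ^ j)"
    using assms by (intro summable_mult summable_geometric) auto
  then have "summable (\<lambda>j. norm ((1 - z * q ^ j) - 1))"
    by (simp add: norm_mult norm_power)
  then show ?thesis
    by (intro abs_convergent_prod_imp_convergent_prod summable_imp_abs_convergent_prod)
qed

lemma pow_ne1:
  fixes q :: complex
  assumes "norm q < 1" "k > 0"
  shows "q ^ k \<noteq> 1" "q ^ k \<noteq> -1"
proof -
  have "norm (q ^ k) < 1" using assms
    by (simp add: norm_power power_less_one_iff)
  then show "q ^ k \<noteq> 1" "q ^ k \<noteq> -1" by auto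
qed

lemma split_P:
  fixes q :: complex
  assumes "norm q < 1"
  shows "qpoch_inf q q = qpoch q q n * qpoch_inf (q ^ (n + 1)) q"
proof -
  have nz: "1 - q * q ^ i \<noteq> 0" for i
    using pow_ne1(1)[OF assms, of "Suc i"] by auto
  have "qpoch_inf q q = (\<Prod>i. 1 - q * q ^ (i + n)) * (\<Prod>i<n. 1 - q * q ^ i)"
    unfolding qpoch_inf_def using prodinf_split_initial_segment[OF qconv[OF assms], of n] nz by blast
  moreover have "(\<lambda>i. 1 - q * q ^ (i + n)) = (\<lambda>i. 1 - q ^ (n + 1) * q ^ i)"
    by (simp add: power_add mult_ac)
  ultimately show ?thesis unfolding qpoch_inf_def qpoch_def by (simp add: mult_ac)
qed

lemma P_nz:
  fixes q :: complex
  assumes "norm q < 1"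
  shows "qpoch_inf q q \<noteq> 0"
proof -
  have nz: "1 - q * q ^ i \<noteq> 0" for i
    using pow_ne1(1)[OF assms, of "Suc i"] by auto
  show ?thesis unfolding qpoch_inf_def using prodinf_nonzero[OF qconv[OF assms]] nz by blast
qed

lemma T_step: "Suc n * (Suc n + 1) div 2 = n * (n + 1) div 2 + (n + 1)"
proof -
  have "Suc n * (Suc n + 1) = n * (n + 1) + 2 * (n + 1)" by simp
  then show ?thesis by simp
qed

theorem corollary4p1:
  fixes q :: complex
  assumes "norm q < 1"
  shows "1 / qpoch_inf q q
         + 4 * (\<Sum>m. let n = Suc m in
              (-1) ^ n * q ^ (n * (n + 1) div 2)
              / (qpoch q q (n - 1) * (1 - q ^ (2 * n)) * qpoch_inf (q ^ (n + 1)) q))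
       = (\<Sum>n. (-1) ^ n * q ^ (n * (n + 1) div 2) * (1 - q ^ (n + 1))
              / (qpoch q q n * (1 + q ^ (n + 1)) * qpoch_inf (q ^ (n + 2)) q))"
proof -
  define P where "P = qpoch_inf q q"
  define a where "a n = (-1) ^ n * q ^ (n * (n + 1) div 2)" for n
  define b where "b n = a n / (1 + q ^ n)" for n
  have Pnz: "P \<noteq> 0" using P_nz[OF assms] P_def by simp
  have asuc: "a (Suc n) = - a n * q ^ (n + 1)" for n
    unfolding a_def T_step by (simp add: power_add)
  have nq: "norm q ^ k < 1" if "k > 0" for k
    using assms that by (simp add: power_less_one_iff)
  have Tge: "n \<le> n * (n + 1) div 2" for n :: nat
  proof -
    have "2 * n \<le> n * (n + 1)" by (cases n) auto
    then show ?thesis by linarith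
  qed
  have na: "norm (a n) \<le> norm q ^ n" for n
    unfolding a_def using Tge[of n] assms
    by (simp add: norm_mult norm_power power_decreasing)
  have suma: "summable (\<lambda>n. norm (a n))"
    by (rule summable_comparison_test[OF _ summable_geometric[of "norm q"]])
       (use na assms in auto)
  have a0: "a \<longlonglongrightarrow> 0"
    using summable_LIMSEQ_zero[OF suma] tendsto_norm_zero_iff by blast
  have nb: "norm (b n) \<le> norm (a n) / (1 - norm q)" for n
  proof -
    have "1 - norm q \<le> 1 - norm q ^ n" if "n > 0"
      using assms that power_decreasing[of 1 n "norm q"] by simp
    moreover have "1 - norm (q ^ n) \<le> norm (1 + q ^ n)"
      using norm_triangle_ineq2[of 1 "- (q ^ n)"] by simp
    ultimately have "1 - norm q \<le> norm (1 + q ^ n)" if "n > 0"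
      using that by (simp add: norm_power)
    moreover have "1 - norm q \<le> norm (1 + q ^ n)" if "n = 0"
      using that norm_ge_zero[of q] by (simp del: norm_ge_zero)
    ultimately have h: "1 - norm q \<le> norm (1 + q ^ n)" by blast
    have pos: "0 < 1 - norm q" using assms by simp
    show ?thesis unfolding b_def norm_divide
      using h pos by (intro divide_left_mono) (simp_all, smt (verit) mult_pos_pos)
  qed
  have sumb: "summable b"
    by (rule summable_comparison_test[OF _ summable_divide[OF suma]]) (use nb in auto)
  have sumb1: "summable (\<lambda>m. b (Suc m))" using sumb by (simp add: summable_Suc_iff)
  have L: "(let n = Suc m in
              (-1) ^ n * q ^ (n * (n + 1) div 2)
              / (qpoch q q (n - 1) * (1 - q ^ (2 * n)) * qpoch_inf (q ^ (n + 1)) q))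
        = b (Suc m) / P" for m
  proof -
    have e1: "qpoch q q (Suc m) = qpoch q q m * (1 - q ^ Suc m)"
      unfolding qpoch_def by simp
    have e2: "1 - q ^ (2 * Suc m) = (1 - q ^ Suc m) * (1 + q ^ Suc m)"
      by (simp add: power_mult algebra_simps power2_eq_square flip: power_add)
    have "P = qpoch q q (Suc m) * qpoch_inf (q ^ (Suc m + 1)) q"
      using split_P[OF assms] P_def by blast
    then have "qpoch q q m * (1 - q ^ (2 * Suc m)) * qpoch_inf (q ^ (Suc m + 1)) q
         = P * (1 + q ^ Suc m)" using e1 e2 by (simp add: mult_ac)
    then show ?thesis unfolding b_def a_def Let_def by simp
  qed
  have R: "(-1) ^ n * q ^ (n * (n + 1) div 2) * (1 - q ^ (n + 1))
              / (qpoch q q n * (1 + q ^ (n + 1)) * qpoch_inf (q ^ (n + 2)) q)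
        = (a n - a (Suc n)) / P + 4 * (b (Suc n) / P)" for n
  proof -
    have e1: "qpoch q q (Suc n) = qpoch q q n * (1 - q ^ Suc n)"
      unfolding qpoch_def by simp
    have "P = qpoch q q (Suc n) * qpoch_inf (q ^ (Suc n + 1)) q"
      using split_P[OF assms] P_def by blast
    then have pe: "P = qpoch q q n * qpoch_inf (q ^ (n + 2)) q * (1 - q ^ (n+1))"
      using e1 by (simp add: mult_ac)
    have n1: "1 - q ^ (n+1) \<noteq> 0" "1 + q ^ (n+1) \<noteq> 0"
      using pow_ne1[OF assms, of "n+1"] by (auto simp: add_eq_0_iff)
    have n2: "qpoch q q n * qpoch_inf (q ^ (n + 2)) q \<noteq> 0" using pe Pnz by auto
    define x where "x = q ^ (n + 1)"
    define Q where "Q = qpoch q q n * qpoch_inf (q ^ (n + 2)) q"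
    have pe': "P = Q * (1 - x)" using pe unfolding Q_def x_def .
    have n1': "1 - x \<noteq> 0" "1 + x \<noteq> 0" using n1 unfolding x_def by auto
    have xs: "q ^ Suc n = x" by (simp add: x_def)
    have n2': "Q \<noteq> 0" using n2 unfolding Q_def .
    have "a n * (1 - x) / (qpoch q q n * (1 + x) * qpoch_inf (q ^ (n + 2)) q)
       = a n * (1 - x) / (Q * (1 + x))" unfolding Q_def by (simp add: mult_ac)
    also have "\<dots> = a n * (1 - x) * (1 - x) / ((Q * (1 + x)) * (1 - x))"
      using n1'(1) by (rule nonzero_mult_divide_mult_cancel_right[symmetric])
    also have "\<dots> = a n * (1 - x) * (1 - x) / ((1 + x) * (Q * (1 - x)))"
      by (simp add: mult_ac)
    also have "\<dots> = a n * (1 - x) * (1 - x) / ((1 + x) * P)" using pe' by simp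
    also have "\<dots> = (a n * (1 - x) * (1 - x) / (1 + x)) / P" by simp
    also have "a n * (1 - x) * (1 - x) / (1 + x) = (a n - a (Suc n)) + 4 * b (Suc n)"
      unfolding b_def asuc x_def[symmetric] using n1' xs
      by (simp add: field_simps)
    also have "((a n - a (Suc n)) + 4 * b (Suc n)) / P = (a n - a (Suc n)) / P + 4 * (b (Suc n) / P)"
      by (simp add: add_divide_distrib)
    finally show ?thesis unfolding a_def x_def .
  qed
  have s1: "(\<lambda>n. a n - a (Suc n)) sums (a 0 - 0)" by (rule telescope_sums'[OF a0])
  have a00: "a 0 = 1" unfolding a_def by simp
  have s2: "(\<lambda>n. (a n - a (Suc n)) / P + 4 * (b (Suc n) / P)) sums (1 / P + 4 * ((\<Sum>m. b (Suc m)) / P))"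
    using sums_add[OF sums_divide[OF s1, of P] sums_mult[OF sums_divide[OF summable_sums[OF sumb1], of P], of 4]]
    a00 by simp
  have lhs: "(\<Sum>m. b (Suc m) / P) = (\<Sum>m. b (Suc m)) / P"
    using suminf_divide[OF sumb1] by simp
  show ?thesis
    unfolding L R P_def[symmetric] lhs using sums_unique[OF s2] by simp
qed

end
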